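(* Let $k$ be an algebraically closed field, $0\ne p\in k$, and $A(p)=k\langle z_1,z_2\rangle/(r_3,r_4)$ with $\deg z_i=1$, $r_3=z_1z_2^2-p^2z_2^2z_1$, $r_4=z_1^3z_2+pz_1^2z_2z_1+p^2z_1z_2z_1^2+p^3z_2z_1^3$. Then $H_{A(p)}(t)=\frac{1}{(1-t)^2(1-t^2)(1-t^3)}$.
   Context: The Hilbert series of a graded vector space $M=\bigoplus M_i$ is $H_M(t)=\sum_i(\dim_kM_i)t^i$. *)

theory Defs
  imports "HOL-Computational_Algebra.Computational_Algebra" "HOL-Library.Function_Algebras"
begin

text \<open>Free algebra k<z1,z2>: elements are finitely supported functions on words over the
  alphabet {z1,z2}; the letter z1 is encoded as False, z2 as True. A word has degree = length.\<close>

definition ncscale :: "'k::field \<Rightarrow> (bool list \<Rightarrow> 'k) \<Rightarrow> (bool list \<Rightarrow> 'k)" where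
  "ncscale c f = (\<lambda>w. c * f w)"

definition ncpoly :: "(bool list \<Rightarrow> 'k::field) set" where
  "ncpoly = {f. finite {w. f w \<noteq> 0}}"

definition ncmult :: "(bool list \<Rightarrow> 'k::field) \<Rightarrow> (bool list \<Rightarrow> 'k) \<Rightarrow> (bool list \<Rightarrow> 'k)" where
  "ncmult f g = (\<lambda>w. \<Sum>i\<le>length w. f (take i w) * g (drop i w))"

definition mon :: "bool list \<Rightarrow> (bool list \<Rightarrow> 'k::field)" where
  "mon u = (\<lambda>w. if w = u then 1 else 0)"

definition nc_ideal :: "(bool list \<Rightarrow> 'k::field) set \<Rightarrow> (bool list \<Rightarrow> 'k) set" where
  "nc_ideal R = module.span ncscale {ncmult a (ncmult r b) | a r b. a \<in> ncpoly \<and> r \<in> R \<and> b \<in> ncpoly}"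

definition nc_hom :: "nat \<Rightarrow> (bool list \<Rightarrow> 'k::field) set" where
  "nc_hom n = {f. \<forall>w. length w \<noteq> n \<longrightarrow> f w = 0}"

text \<open>dim_k of the degree-n component of k<z1,z2>/I, i.e. dim (F_n) - dim (I \<inter> F_n)
  (I homogeneous).\<close>
definition quot_dim :: "(bool list \<Rightarrow> 'k::field) set \<Rightarrow> nat \<Rightarrow> nat" where
  "quot_dim I n = vector_space.dim ncscale (nc_hom n :: (bool list \<Rightarrow> 'k) set)
                   - vector_space.dim ncscale (I \<inter> nc_hom n)"

definition hilbert_series :: "(bool list \<Rightarrow> 'k::field) set \<Rightarrow> rat fps" where
  "hilbert_series I = Abs_fps (\<lambda>n. of_nat (quot_dim I n))"

definition r3 :: "'k::field \<Rightarrow> (bool list \<Rightarrow> 'k)" where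
  "r3 p = (\<lambda>w. mon [False, True, True] w - p^2 * mon [True, True, False] w)"

definition r4 :: "'k::field \<Rightarrow> (bool list \<Rightarrow> 'k)" where
  "r4 p = (\<lambda>w. mon [False, False, False, True] w + p * mon [False, False, True, False] w
              + p^2 * mon [False, True, False, False] w + p^3 * mon [True, False, False, False] w)"

end

theory Submission
  imports Defs
begin


datatype rl = R1 | R2 | R3

fun lhs :: "rl \<Rightarrow> bool list" where
  "lhs R1 = [False, True, True]"
| "lhs R2 = [False, False, False, True]"
| "lhs R3 = [False, False, True, False, True]"

fun rhs :: "'k::field \<Rightarrow> rl \<Rightarrow> ('k \<times> bool list) list" where
  "rhs p R1 = [(p^2, [True, True, False])]"
| "rhs p R2 = [(-p, [False, False, True, False]), (-(p^2), [False, True, False, False]), (-(p^3), [True, False, False, False])]"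
| "rhs p R3 = [(-p, [False, True, False, False, True]), (p^3, [True, False, False, True, False]), (p^4, [True, False, True, False, False])]"

fun val :: "bool list \<Rightarrow> nat" where
  "val [] = 0"
| "val (b # w) = (if b then 0 else 2 ^ length w) + val w"

lemma val_append: "val (u @ v) = val u * 2 ^ length v + val v"
  by (induction u) (auto simp: algebra_simps power_add)

lemma val_mono: "length u = length v \<Longrightarrow> val u < val v \<Longrightarrow> val (A @ u @ C) < val (A @ v @ C)"
  by (simp add: val_append)

lemma rhs_less: "cm \<in> set (rhs p r) \<Longrightarrow> length (snd cm) = length (lhs r) \<and> val (snd cm) < val (lhs r)"
  by (cases r) auto

definition occ :: "bool list \<Rightarrow> bool list \<times> rl \<times> bool list \<Rightarrow> bool" where
  "occ w t \<longleftrightarrow> w = fst t @ lhs (fst (snd t)) @ snd (snd t)"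

function NF :: "'k::field \<Rightarrow> bool list \<Rightarrow> bool list \<Rightarrow> 'k" where
  "NF p w v = (if (\<exists>t. occ w t) then
     (let t = (SOME t. occ w t) in
       sum_list (map (\<lambda>cm. fst cm * NF p (fst t @ snd cm @ snd (snd t)) v) (rhs p (fst (snd t)))))
     else (if w = v then 1 else 0))"
  by pat_completeness auto
termination
proof (relation "measure (\<lambda>(p,w,v). val w)")
  fix p :: "'k::field" and w v t cm
  assume "\<exists>t. occ w t" "t = (SOME t. occ w t)" "cm \<in> set (rhs p (fst (snd t)))"
  then have "occ w t" by (metis someI_ex)
  then show "((p, fst t @ snd cm @ snd (snd t), v), p, w, v) \<in> measure (\<lambda>(p, w, v). val w)"
    using rhs_less[OF \<open>cm \<in> _\<close>] val_mono by (auto simp: occ_def)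
qed auto

declare NF.simps[simp del]

definition red :: "'k::field \<Rightarrow> bool list \<times> rl \<times> bool list \<Rightarrow> bool list \<Rightarrow> 'k" where
  "red p t v = sum_list (map (\<lambda>cm. fst cm * NF p (fst t @ snd cm @ snd (snd t)) v) (rhs p (fst (snd t))))"

lemma NF_occ: "occ w t \<Longrightarrow> NF p w v = red p (SOME t. occ w t) v \<and> occ w (SOME t. occ w t)"
proof -
  assume a: "occ w t"
  then have e: "\<exists>t. occ w t" by blast
  show ?thesis unfolding red_def
    by (subst NF.simps) (simp only: if_P[OF e] Let_def someI[of "occ w", OF a] simp_thms)
qed

lemma NF_nocc: "\<not> (\<exists>t. occ w t) \<Longrightarrow> NF p w v = (if w = v then 1 else 0)"
  by (subst NF.simps) auto

lemma sum_list_swap: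
  "sum_list (map (\<lambda>x. f x * sum_list (map (\<lambda>y. g y * h x y) ys)) xs) =
   sum_list (map (\<lambda>y. g y * sum_list (map (\<lambda>x. f x * h x y) xs)) ys)"
  for f g :: "_ \<Rightarrow> 'a::comm_ring_1"
proof (induction xs)
  case Nil then show ?case by (simp add: sum_list_const_mult[symmetric])
next
  case (Cons x xs)
  have "sum_list (map (\<lambda>y. g y * sum_list (map (\<lambda>x. f x * h x y) (x # xs))) ys)
     = sum_list (map (\<lambda>y. f x * (g y * h x y) + g y * sum_list (map (\<lambda>x. f x * h x y) xs)) ys)"
    by (simp add: algebra_simps)
  also have "\<dots> = f x * sum_list (map (\<lambda>y. g y * h x y) ys) + sum_list (map (\<lambda>y. g y * sum_list (map (\<lambda>x. f x * h x y) xs)) ys)"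
    by (simp add: sum_list_addf sum_list_const_mult)
  finally show ?case using Cons by simp
qed

lemma step:
  assumes IH: "\<And>w' t'. val w' < val w \<Longrightarrow> occ w' t' \<Longrightarrow> NF p w' v = red p t' v"
    and "w = A @ W0 @ C" "length u = length W0" "val u < val W0" "u = X @ lhs r @ Y"
  shows "NF p (A @ u @ C) v = red p (A @ X, r, Y @ C) v"
proof -
  have "val (A @ u @ C) < val (A @ W0 @ C)" using assms(3,4) by (rule val_mono)
  then show ?thesis using assms by (intro IH) (auto simp: occ_def)
qed

lemma overlap_cases:
  assumes "drop d (lhs r1) @ C1 = lhs r2 @ C2" "d < length (lhs r1)"
  shows "(d = 0 \<and> r1 = r2 \<and> C1 = C2) \<or> (r1 = R2 \<and> r2 = R1 \<and> d = 2 \<and> C1 = [True] @ C2)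
     \<or> (r1 = R2 \<and> r2 = R3 \<and> d = 1 \<and> C1 = [False, True] @ C2) \<or> (r1 = R3 \<and> r2 = R1 \<and> d = 3 \<and> C1 = [True] @ C2)"
proof -
  have "d \<in> {0,1,2,3,4}" using assms(2) by (cases r1) auto
  then show ?thesis using assms by (cases r1; cases r2) auto
qed



lemma ov1:
  assumes IH: "\<And>w' t'. val w' < val w \<Longrightarrow> occ w' t' \<Longrightarrow> NF p w' v = red p t' v"
    and w: "w = A @ [False, False, False, True, True] @ C"
  shows "red p (A, R2, [True] @ C) v = red p (A @ [False, False], R1, C) v"
proof -
  have 1: "NF p (A @ [False, False, True, False, True] @ C) v = red p (A @ [], R3, [] @ C) v"
    by (rule step[OF IH w]) simp_all
  have 2: "NF p (A @ [True, False, False, False, True] @ C) v = red p (A @ [True], R2, [] @ C) v"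
    by (rule step[OF IH w]) simp_all
  have 3: "NF p (A @ [False, False, True, True, False] @ C) v = red p (A @ [False], R1, [False] @ C) v"
    by (rule step[OF IH w]) simp_all
  have 4: "NF p (A @ [False, True, True, False, False] @ C) v = red p (A @ [], R1, [False, False] @ C) v"
    by (rule step[OF IH w]) simp_all
  show ?thesis
    apply (simp add: red_def 1[unfolded red_def, simplified] 2[unfolded red_def, simplified] 3[unfolded red_def, simplified] 4[unfolded red_def, simplified])
    by algebra
qed

lemma ov2:
  assumes IH: "\<And>w' t'. val w' < val w \<Longrightarrow> occ w' t' \<Longrightarrow> NF p w' v = red p t' v"
    and w: "w = A @ [False, False, False, True, False, True] @ C"
  shows "red p (A, R2, [False, True] @ C) v = red p (A @ [False], R3, C) v"
proof -
  have 1: "NF p (A @ [False, True, False, False, False, True] @ C) v = red p (A @ [False, True], R2, [] @ C) v"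
    by (rule step[OF IH w]) simp_all
  have 2: "NF p (A @ [False, True, True, False, False, False] @ C) v = red p (A @ [], R1, [False, False, False] @ C) v"
    by (rule step[OF IH w]) simp_all
  have 3: "NF p (A @ [True, False, False, False, False, True] @ C) v = red p (A @ [True, False], R2, [] @ C) v"
    by (rule step[OF IH w]) simp_all
  have 4: "NF p (A @ [True, False, False, False, True, False] @ C) v = red p (A @ [True], R2, [False] @ C) v"
    by (rule step[OF IH w]) simp_all
  show ?thesis
    apply (simp add: red_def 1[unfolded red_def, simplified] 2[unfolded red_def, simplified] 3[unfolded red_def, simplified] 4[unfolded red_def, simplified])
    by algebra
qed

lemma ov3:
  assumes IH: "\<And>w' t'. val w' < val w \<Longrightarrow> occ w' t' \<Longrightarrow> NF p w' v = red p t' v"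
    and w: "w = A @ [False, False, True, False, True, True] @ C"
  shows "red p (A, R3, [True] @ C) v = red p (A @ [False, False, True], R1, C) v"
proof -
  have 1: "NF p (A @ [False, True, False, False, True, True] @ C) v = red p (A @ [False, True, False], R1, [] @ C) v"
    by (rule step[OF IH w]) simp_all
  have 2: "NF p (A @ [False, True, False, True, True, False] @ C) v = red p (A @ [False, True], R1, [False] @ C) v"
    by (rule step[OF IH w]) simp_all
  have 3: "NF p (A @ [False, True, True, True, False, False] @ C) v = red p (A @ [], R1, [True, False, False] @ C) v"
    by (rule step[OF IH w]) simp_all
  have 4: "NF p (A @ [True, False, False, True, False, True] @ C) v = red p (A @ [True], R3, [] @ C) v"
    by (rule step[OF IH w]) simp_all
  have 5: "NF p (A @ [False, False, True, True, True, False] @ C) v = red p (A @ [False], R1, [True, False] @ C) v"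
    by (rule step[OF IH w]) simp_all
  have 6: "NF p (A @ [False, True, True, False, True, False] @ C) v = red p (A @ [], R1, [False, True, False] @ C) v"
    by (rule step[OF IH w]) simp_all
  show ?thesis
    apply (simp add: red_def 1[unfolded red_def, simplified] 2[unfolded red_def, simplified] 3[unfolded red_def, simplified] 4[unfolded red_def, simplified] 5[unfolded red_def, simplified] 6[unfolded red_def, simplified])
    by algebra
qed



lemma disjoint:
  assumes IH: "\<And>w' t'. val w' < val w \<Longrightarrow> occ w' t' \<Longrightarrow> NF p w' v = red p t' v"
    and w: "w = A @ lhs ra @ B @ lhs rb @ C"
  shows "red p (A, ra, B @ lhs rb @ C) v = red p (A @ lhs ra @ B, rb, C) v"
proof -
  have L: "red p (A, ra, B @ lhs rb @ C) v =
     sum_list (map (\<lambda>cm. fst cm * sum_list (map (\<lambda>cm'. fst cm' * NF p (A @ snd cm @ B @ snd cm' @ C) v) (rhs p rb))) (rhs p ra))"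
    unfolding red_def fst_conv snd_conv
  proof (intro arg_cong[where f=sum_list] map_cong refl)
    fix cm assume cm: "cm \<in> set (rhs p ra)"
    have "NF p (A @ snd cm @ B @ lhs rb @ C) v = red p (A @ snd cm @ B, rb, C) v"
    proof (rule IH)
      show "val (A @ snd cm @ B @ lhs rb @ C) < val w"
        unfolding w using rhs_less[OF cm] by (intro val_mono) auto
    qed (simp add: occ_def)
    then show "fst cm * NF p (A @ snd cm @ B @ lhs rb @ C) v =
      fst cm * sum_list (map (\<lambda>cm'. fst cm' * NF p (A @ snd cm @ B @ snd cm' @ C) v) (rhs p rb))"
      by (simp add: red_def)
  qed
  have R: "red p (A @ lhs ra @ B, rb, C) v =
     sum_list (map (\<lambda>cm'. fst cm' * sum_list (map (\<lambda>cm. fst cm * NF p (A @ snd cm @ B @ snd cm' @ C) v) (rhs p ra))) (rhs p rb))"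
    unfolding red_def fst_conv snd_conv
  proof (intro arg_cong[where f=sum_list] map_cong refl)
    fix cm' assume cm': "cm' \<in> set (rhs p rb)"
    have "NF p (A @ lhs ra @ B @ snd cm' @ C) v = red p (A, ra, B @ snd cm' @ C) v"
    proof (rule IH)
      have "val ((A @ lhs ra @ B) @ snd cm' @ C) < val ((A @ lhs ra @ B) @ lhs rb @ C)"
        using rhs_less[OF cm'] by (intro val_mono) auto
      then show "val (A @ lhs ra @ B @ snd cm' @ C) < val w" unfolding w by simp
    qed (simp add: occ_def)
    then show "fst cm' * NF p ((A @ lhs ra @ B) @ snd cm' @ C) v =
      fst cm' * sum_list (map (\<lambda>cm. fst cm * NF p (A @ snd cm @ B @ snd cm' @ C) v) (rhs p ra))"
      by (simp add: red_def)
  qed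
  show ?thesis unfolding L R by (rule sum_list_swap)
qed

lemma two_occ_le:
  assumes IH: "\<And>w' t'. val w' < val w \<Longrightarrow> occ w' t' \<Longrightarrow> NF p w' v = red p t' v"
    and o1: "occ w (A1, r1, C1)" and o2: "occ w (A2, r2, C2)" and le: "length A1 \<le> length A2"
  shows "red p (A1, r1, C1) v = red p (A2, r2, C2) v"
proof -
  from o1 o2 have eq: "A1 @ lhs r1 @ C1 = A2 @ lhs r2 @ C2" and w: "w = A1 @ lhs r1 @ C1"
    by (auto simp: occ_def)
  define D where "D = drop (length A1) A2"
  have A1: "A1 = take (length A1) A2" and eq2: "lhs r1 @ C1 = D @ lhs r2 @ C2"
    using eq le unfolding D_def by (auto simp: append_eq_append_conv_if)
  have A2: "A2 = A1 @ D" unfolding D_def by (subst A1) simp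
  show ?thesis
  proof (cases "length (lhs r1) \<le> length D")
    case True
    define B where "B = drop (length (lhs r1)) D"
    have D: "D = lhs r1 @ B" and C1: "C1 = B @ lhs r2 @ C2"
      using eq2 True unfolding B_def by (auto simp: append_eq_append_conv_if) (metis append_take_drop_id)
    have "w = A1 @ lhs r1 @ B @ lhs r2 @ C2" using w C1 by simp
    from disjoint[OF IH this] show ?thesis unfolding A2 D C1 by simp
  next
    case False
    then have D: "D = take (length D) (lhs r1)" and e: "drop (length D) (lhs r1) @ C1 = lhs r2 @ C2"
      using eq2 by (auto simp: append_eq_append_conv_if)
    have "length D < length (lhs r1)" using False by simp
    from overlap_cases[OF e this] show ?thesis
    proof (elim disjE conjE)
      assume "length D = 0" "r1 = r2" "C1 = C2"
      then show ?thesis using A2 by simp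
    next
      assume a: "r1 = R2" "r2 = R1" "length D = 2" "C1 = [True] @ C2"
      then have "D = [False, False]" using D by simp
      moreover have "w = A1 @ [False, False, False, True, True] @ C2" using w a by simp
      ultimately show ?thesis using a A2 ov1[OF IH] by simp
    next
      assume a: "r1 = R2" "r2 = R3" "length D = 1" "C1 = [False, True] @ C2"
      then have "D = [False]" using D by simp
      moreover have "w = A1 @ [False, False, False, True, False, True] @ C2" using w a by simp
      ultimately show ?thesis using a A2 ov2[OF IH] by simp
    next
      assume a: "r1 = R3" "r2 = R1" "length D = 3" "C1 = [True] @ C2"
      then have "D = [False, False, True]" using D by simp
      moreover have "w = A1 @ [False, False, True, False, True, True] @ C2" using w a by simp
      ultimately show ?thesis using a A2 ov3[OF IH] by simp
    qed
  qed
qed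

lemma KL: "occ w t \<Longrightarrow> NF p w v = red p t v"
proof (induction "val w" arbitrary: w t rule: less_induct)
  case less
  have IH: "\<And>w' t'. val w' < val w \<Longrightarrow> occ w' t' \<Longrightarrow> NF p w' v = red p t' v"
    using less by blast
  obtain s where s: "s = (SOME t. occ w t)" by blast
  have 1: "NF p w v = red p s v" "occ w s" using NF_occ[OF less(2)] s by auto
  have "red p s v = red p t v"
  proof -
    obtain A1 r1 C1 where s': "s = (A1, r1, C1)" by (cases s) auto
    obtain A2 r2 C2 where t': "t = (A2, r2, C2)" by (cases t) auto
    show ?thesis
    proof (cases "length A1 \<le> length A2")
      case True then show ?thesis unfolding s' t' using two_occ_le[OF IH] 1(2) less(2) s' t' by blast
    next
      case False then show ?thesis unfolding s' t' using two_occ_le[OF IH] 1(2) less(2) s' t'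
        by (metis nat_le_linear)
    qed
  qed
  then show ?case using 1 by simp
qed



lemma sum_list_map_nz: "sum_list (map f xs) \<noteq> 0 \<Longrightarrow> \<exists>x\<in>set xs. f x \<noteq> (0::'a::comm_monoid_add)"
  by (induction xs) auto

lemma NF_support: "NF p w v \<noteq> 0 \<Longrightarrow> length v = length w \<and> \<not> (\<exists>t. occ v t)"
proof (induction "val w" arbitrary: w rule: less_induct)
  case less
  show ?case
  proof (cases "\<exists>t. occ w t")
    case True
    then obtain t where t: "occ w t" by blast
    obtain A r C where tt: "t = (A, r, C)" by (cases t) auto
    have "NF p w v = red p t v" by (rule KL[OF t])
    with less(2) obtain cm where cm: "cm \<in> set (rhs p r)" and nz: "NF p (A @ snd cm @ C) v \<noteq> 0"
      unfolding red_def tt by (auto dest!: sum_list_map_nz)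
    have w: "w = A @ lhs r @ C" using t tt by (simp add: occ_def)
    have "val (A @ snd cm @ C) < val w" unfolding w using rhs_less[OF cm] by (intro val_mono) auto
    from less(1)[OF this nz] show ?thesis using rhs_less[OF cm] w by simp
  next
    case False
    with less(2) show ?thesis by (simp add: NF_nocc split: if_splits)
  qed
qed

lemma vs: "vector_space (ncscale :: 'k::field \<Rightarrow> (bool list \<Rightarrow> 'k) \<Rightarrow> _)"
  by unfold_locales (auto simp: ncscale_def fun_eq_iff algebra_simps)

definition Phi :: "'k::field \<Rightarrow> (bool list \<Rightarrow> 'k) \<Rightarrow> bool list \<Rightarrow> 'k" where
  "Phi p g v = (\<Sum>w | length w = length v. g w * NF p w v)"

lemma finite_len: "finite {w :: bool list. length w = n}"
  using finite_lists_length_eq[of "UNIV :: bool set" n] by simp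

lemma reindex:
  "(\<Sum>w | length w = n. \<Sum>i\<le>n. F i (take i w) (drop i w)) =
   (\<Sum>i\<le>n. \<Sum>u | length u = i. \<Sum>s | length s = n - i. F i u s)"
proof -
  have "(\<Sum>w | length w = n. \<Sum>i\<le>n. F i (take i w) (drop i w)) =
        (\<Sum>i\<le>n. \<Sum>w | length w = n. F i (take i w) (drop i w))" by (rule sum.swap)
  also have "\<dots> = (\<Sum>i\<le>n. \<Sum>u | length u = i. \<Sum>s | length s = n - i. F i u s)"
  proof (rule sum.cong[OF refl])
    fix i assume i: "i \<in> {..n}"
    have "(\<Sum>u | length u = i. \<Sum>s | length s = n - i. F i u s) =
          (\<Sum>us \<in> {u. length u = i} \<times> {s. length s = n - i}. F i (fst us) (snd us))"
      by (simp add: sum.cartesian_product finite_len split_def)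
    also have "\<dots> = (\<Sum>w | length w = n. F i (take i w) (drop i w))"
    proof (rule sum.reindex_bij_witness[where i = "\<lambda>w. (take i w, drop i w)" and j = "\<lambda>us. fst us @ snd us"])
    qed (use i in auto)
    finally show "(\<Sum>w | length w = n. F i (take i w) (drop i w)) =
          (\<Sum>u | length u = i. \<Sum>s | length s = n - i. F i u s)" by simp
  qed
  finally show ?thesis .
qed

lemma sum_mon: "(\<Sum>s | length s = j. mon m s * X s) = (if length m = j then X m else (0::'k::field))"
proof -
  have "(\<Sum>s | length s = j. mon m s * X s) = (\<Sum>s | length s = j. if m = s then X s else 0)"
    by (rule sum.cong) (auto simp: mon_def)
  also have "\<dots> = (if length m = j then X m else 0)" by (simp add: finite_len)
  finally show ?thesis .
qed

lemma sum_r3: "(\<Sum>s | length s = j. r3 p s * X s) =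
   (if j = 3 then X [False, True, True] - p^2 * X [True, True, False] else (0::'k::field))"
proof -
  have "(\<Sum>s | length s = j. r3 p s * X s) =
    (\<Sum>s | length s = j. mon [False, True, True] s * X s) - p^2 * (\<Sum>s | length s = j. mon [True, True, False] s * X s)"
    by (simp add: r3_def algebra_simps sum_subtractf sum_distrib_left)
  then show ?thesis by (simp add: sum_mon)
qed

lemma sum_r4: "(\<Sum>s | length s = j. r4 p s * X s) =
   (if j = 4 then X [False, False, False, True] + p * X [False, False, True, False]
     + p^2 * X [False, True, False, False] + p^3 * X [True, False, False, False] else (0::'k::field))"
proof -
  have "(\<Sum>s | length s = j. r4 p s * X s) =
    (\<Sum>s | length s = j. mon [False, False, False, True] s * X s) + p * (\<Sum>s | length s = j. mon [False, False, True, False] s * X s)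
    + p^2 * (\<Sum>s | length s = j. mon [False, True, False, False] s * X s) + p^3 * (\<Sum>s | length s = j. mon [True, False, False, False] s * X s)"
    by (simp add: r4_def algebra_simps sum.distrib sum_distrib_left)
  then show ?thesis by (simp add: sum_mon)
qed

lemma K:
  assumes r: "r \<in> {r3 p, r4 p}"
  shows "(\<Sum>s | length s = j. r s * NF p (u @ s @ s2) v) = 0"
proof -
  have 1: "NF p (u @ lhs R1 @ s2) v = red p (u, R1, s2) v"
    by (rule KL) (simp add: occ_def)
  have 2: "NF p (u @ lhs R2 @ s2) v = red p (u, R2, s2) v"
    by (rule KL) (simp add: occ_def)
  show ?thesis using r
  proof
    assume "r = r3 p" then show ?thesis using 1 by (simp add: sum_r3 red_def)
  next
    assume "r \<in> {r4 p}" then show ?thesis using 2 by (simp add: sum_r4 red_def)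
  qed
qed

lemma inner0:
  assumes r: "r \<in> {r3 p, r4 p}"
  shows "(\<Sum>s | length s = m. ncmult r b s * NF p (u @ s) v) = 0"
proof -
  have "(\<Sum>s | length s = m. ncmult r b s * NF p (u @ s) v) =
     (\<Sum>s | length s = m. \<Sum>j\<le>m. r (take j s) * b (drop j s) * NF p (u @ take j s @ drop j s) v)"
    by (rule sum.cong) (auto simp: ncmult_def sum_distrib_right)
  also have "\<dots> = (\<Sum>j\<le>m. \<Sum>s1 | length s1 = j. \<Sum>s2 | length s2 = m - j. r s1 * b s2 * NF p (u @ s1 @ s2) v)"
    by (rule reindex[where F = "\<lambda>j s1 s2. r s1 * b s2 * NF p (u @ s1 @ s2) v"])
  also have "\<dots> = 0"
  proof (rule sum.neutral, rule ballI)
    fix j assume "j \<in> {..m}"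
    have "(\<Sum>s1 | length s1 = j. \<Sum>s2 | length s2 = m - j. r s1 * b s2 * NF p (u @ s1 @ s2) v)
       = (\<Sum>s2 | length s2 = m - j. b s2 * (\<Sum>s1 | length s1 = j. r s1 * NF p (u @ s1 @ s2) v))"
      by (subst sum.swap) (simp add: sum_distrib_left algebra_simps)
    also have "\<dots> = 0" using K[OF r] by simp
    finally show "(\<Sum>s1 | length s1 = j. \<Sum>s2 | length s2 = m - j. r s1 * b s2 * NF p (u @ s1 @ s2) v) = 0" .
  qed
  finally show ?thesis .
qed

lemma Phi_gen:
  assumes r: "r \<in> {r3 p, r4 p}"
  shows "Phi p (ncmult a (ncmult r b)) v = 0"
proof -
  let ?n = "length v"
  have "Phi p (ncmult a (ncmult r b)) v =
     (\<Sum>w | length w = ?n. \<Sum>i\<le>?n. a (take i w) * ncmult r b (drop i w) * NF p (take i w @ drop i w) v)"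
    unfolding Phi_def by (rule sum.cong) (auto simp: ncmult_def sum_distrib_right)
  also have "\<dots> = (\<Sum>i\<le>?n. \<Sum>u | length u = i. \<Sum>s | length s = ?n - i. a u * ncmult r b s * NF p (u @ s) v)"
    by (rule reindex[where F = "\<lambda>i u s. a u * ncmult r b s * NF p (u @ s) v"])
  also have "\<dots> = 0"
  proof (rule sum.neutral, rule ballI)
    fix i assume "i \<in> {..?n}"
    have "(\<Sum>u | length u = i. \<Sum>s | length s = ?n - i. a u * ncmult r b s * NF p (u @ s) v) =
          (\<Sum>u | length u = i. a u * (\<Sum>s | length s = ?n - i. ncmult r b s * NF p (u @ s) v))"
      by (simp add: sum_distrib_left algebra_simps)
    also have "\<dots> = 0" using inner0[OF r] by simp
    finally show "(\<Sum>u | length u = i. \<Sum>s | length s = ?n - i. a u * ncmult r b s * NF p (u @ s) v) = 0" .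
  qed
  finally show ?thesis .
qed

lemma Phi_ideal:
  assumes "g \<in> nc_ideal {r3 p, r4 p}"
  shows "Phi p g = 0"
proof -
  interpret V: vector_space "ncscale :: 'k::field \<Rightarrow> (bool list \<Rightarrow> 'k) \<Rightarrow> _" by (rule vs)
  have sub: "V.subspace {g. Phi p g = 0}"
    unfolding V.subspace_def
    by (auto simp: Phi_def fun_eq_iff ncscale_def sum.distrib algebra_simps simp flip: sum_distrib_left)
  have "nc_ideal {r3 p, r4 p} \<subseteq> {g. Phi p g = 0}"
    unfolding nc_ideal_def
    by (rule V.span_minimal[OF _ sub]) (auto simp: Phi_gen)
  with assms show ?thesis by auto
qed



interpretation V: vector_space "ncscale :: 'k::field \<Rightarrow> (bool list \<Rightarrow> 'k) \<Rightarrow> _" by (rule vs)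

lemma mon_mult: "ncmult (mon A) (mon B) = (mon (A @ B) :: bool list \<Rightarrow> 'k::field)"
proof (rule ext)
  fix v :: "bool list"
  have "ncmult (mon A) (mon B) v = (\<Sum>i\<le>length v. if i = length A then (if v = A @ B then 1 else 0) else (0::'k))"
    unfolding ncmult_def
  proof (rule sum.cong[OF refl])
    fix i assume i: "i \<in> {..length v}"
    show "mon A (take i v) * mon B (drop i v) = (if i = length A then (if v = A @ B then 1 else 0) else (0::'k))"
    proof (cases "i = length A")
      case True
      have eq: "(take i v = A \<and> drop i v = B) = (v = A @ B)"
        using True by (metis append_eq_conv_conj)
      show ?thesis unfolding mon_def using True eq by auto
    next
      case False
      have "take i v \<noteq> A" using False i by auto
      then show ?thesis using False by (simp add: mon_def)
    qed
  qed
  also have "\<dots> = mon (A @ B) v" by (simp add: mon_def)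
  finally show "ncmult (mon A) (mon B) v = (mon (A @ B) v :: 'k)" .
qed

lemma ncmult_add_left: "ncmult (f + g) h = ncmult f h + ncmult g h"
  by (auto simp: ncmult_def fun_eq_iff sum.distrib algebra_simps)
lemma ncmult_add_right: "ncmult h (f + g) = ncmult h f + ncmult h g"
  by (auto simp: ncmult_def fun_eq_iff sum.distrib algebra_simps)
lemma ncmult_diff_left: "ncmult (f - g) h = ncmult f h - ncmult g h"
  by (auto simp: ncmult_def fun_eq_iff sum_subtractf algebra_simps)
lemma ncmult_diff_right: "ncmult h (f - g) = ncmult h f - ncmult h g"
  by (auto simp: ncmult_def fun_eq_iff sum_subtractf algebra_simps)
lemma ncmult_scale_left: "ncmult (ncscale c f) h = ncscale c (ncmult f h)"
  by (auto simp: ncmult_def ncscale_def fun_eq_iff sum_distrib_left algebra_simps)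
lemma ncmult_scale_right: "ncmult h (ncscale c f) = ncscale c (ncmult h f)"
  by (auto simp: ncmult_def ncscale_def fun_eq_iff sum_distrib_left algebra_simps)

lemma r3_eq: "r3 p = mon [False, True, True] - ncscale (p^2) (mon [True, True, False])"
  by (auto simp: r3_def ncscale_def fun_eq_iff)
lemma r4_eq: "r4 p = mon [False, False, False, True] + ncscale p (mon [False, False, True, False])
   + ncscale (p^2) (mon [False, True, False, False]) + ncscale (p^3) (mon [True, False, False, False])"
  by (auto simp: r4_def ncscale_def fun_eq_iff)

definition gen :: "bool list \<Rightarrow> (bool list \<Rightarrow> 'k::field) \<Rightarrow> bool list \<Rightarrow> (bool list \<Rightarrow> 'k)" where
  "gen A g C = ncmult (mon A) (ncmult g (mon C))"

lemma gen_r3: "gen A (r3 p) C = (\<lambda>v. mon (A @ [False, True, True] @ C) v - p^2 * mon (A @ [True, True, False] @ C) v)"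
  unfolding gen_def r3_eq ncmult_diff_left ncmult_diff_right ncmult_scale_left ncmult_scale_right mon_mult
  by (simp add: ncscale_def fun_eq_iff)

lemma gen_r4: "gen A (r4 p) C = (\<lambda>v. mon (A @ [False, False, False, True] @ C) v + p * mon (A @ [False, False, True, False] @ C) v
   + p^2 * mon (A @ [False, True, False, False] @ C) v + p^3 * mon (A @ [True, False, False, False] @ C) v)"
  unfolding gen_def r4_eq ncmult_add_left ncmult_add_right ncmult_scale_left ncmult_scale_right mon_mult
  by (simp add: ncscale_def fun_eq_iff)

lemma mon_ncpoly: "mon A \<in> ncpoly"
  by (simp add: ncpoly_def mon_def)

lemma gen_in: "g \<in> {r3 p, r4 p} \<Longrightarrow> gen A g C \<in> nc_ideal {r3 p, r4 p}"
  unfolding nc_ideal_def gen_def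
  by (rule V.span_base) (use mon_ncpoly in blast)

definition E :: "'k::field \<Rightarrow> rl \<Rightarrow> bool list \<Rightarrow> bool list \<Rightarrow> (bool list \<Rightarrow> 'k)" where
  "E p r A C = mon (A @ lhs r @ C) - sum_list (map (\<lambda>cm. ncscale (fst cm) (mon (A @ snd cm @ C))) (rhs p r))"

lemma E1: "E p R1 A C = gen A (r3 p) C"
  by (simp add: E_def gen_r3 fun_eq_iff ncscale_def)

lemma E2: "E p R2 A C = gen A (r4 p) C"
  by (simp add: E_def gen_r4 fun_eq_iff ncscale_def)

lemma E3: "ncscale p (E p R3 A C) = gen A (r4 p) ([True] @ C) - gen (A @ [False, False]) (r3 p) C
   - ncscale (p^2) (gen (A @ [False]) (r3 p) ([False] @ C)) - ncscale (p^4) (gen A (r3 p) ([False, False] @ C))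
   - ncscale (p^3) (gen (A @ [True]) (r4 p) C)"
  apply (simp add: E_def gen_r3 gen_r4 fun_eq_iff ncscale_def)
  by algebra

lemma E_in:
  assumes "p \<noteq> 0"
  shows "E p r A C \<in> nc_ideal {r3 p, r4 p}"
proof (cases r)
  case R1 then show ?thesis using gen_in[of "r3 p" p A C] by (simp add: E1)
next
  case R2 then show ?thesis using gen_in[of "r4 p" p A C] by (simp add: E2)
next
  case R3
  have "ncscale p (E p R3 A C) \<in> nc_ideal {r3 p, r4 p}"
    unfolding E3 nc_ideal_def
    by (intro V.span_diff V.span_scale gen_in[unfolded nc_ideal_def]) auto
  then have "ncscale (1/p) (ncscale p (E p R3 A C)) \<in> nc_ideal {r3 p, r4 p}"
    unfolding nc_ideal_def by (rule V.span_scale)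
  then show ?thesis using R3 assms by (simp add: ncscale_def)
qed



lemma sum_list_apply: "sum_list (map f xs) v = sum_list (map (\<lambda>x. f x v) xs)"
  by (induction xs) auto

lemma span_sum_list: "(\<And>x. x \<in> set xs \<Longrightarrow> f x \<in> V.span S) \<Longrightarrow> sum_list (map f xs) \<in> V.span S"
  by (induction xs) (auto intro: V.span_add V.span_zero)

lemma NF_in:
  assumes p: "p \<noteq> 0"
  shows "mon w - (\<lambda>v. NF p w v) \<in> nc_ideal {r3 p, r4 p}"
proof (induction "val w" arbitrary: w rule: less_induct)
  case less
  show ?case
  proof (cases "\<exists>t. occ w t")
    case True
    then obtain A r C where t: "occ w (A, r, C)" by auto
    have w: "w = A @ lhs r @ C" using t by (simp add: occ_def)
    have eq: "mon w - (\<lambda>v. NF p w v) = E p r A C +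
       sum_list (map (\<lambda>cm. ncscale (fst cm) (mon (A @ snd cm @ C) - (\<lambda>v. NF p (A @ snd cm @ C) v))) (rhs p r))"
      using KL[OF t, of p]
      by (simp add: fun_eq_iff E_def red_def w sum_list_apply ncscale_def algebra_simps sum_list_subtractf)
    show ?thesis unfolding eq nc_ideal_def
    proof (intro V.span_add E_in[OF p, unfolded nc_ideal_def] span_sum_list V.span_scale)
      fix cm assume cm: "cm \<in> set (rhs p r)"
      have "val (A @ snd cm @ C) < val w" unfolding w using rhs_less[OF cm] by (intro val_mono) auto
      from less[OF this] show "mon (A @ snd cm @ C) - (\<lambda>v. NF p (A @ snd cm @ C) v) \<in> V.span {ncmult a (ncmult r b) |a r b. a \<in> ncpoly \<and> r \<in> {r3 p, r4 p} \<and> b \<in> ncpoly}"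
        unfolding nc_ideal_def .
    qed
  next
    case False
    then have "mon w - (\<lambda>v. NF p w v) = 0" by (simp add: fun_eq_iff NF_nocc mon_def)
    then show ?thesis unfolding nc_ideal_def by (simp add: V.span_zero)
  qed
qed



lemma sum_apply: "(\<Sum>x\<in>A. f x) v = (\<Sum>x\<in>A. f x v)"
  by (induction A rule: infinite_finite_induct) auto

lemma indep_witness:
  assumes "finite X" "\<And>x. x \<in> X \<Longrightarrow> x (e x) = 1" "\<And>x y. x \<in> X \<Longrightarrow> y \<in> X \<Longrightarrow> y \<noteq> x \<Longrightarrow> y (e x) = (0::'k::field)"
  shows "V.independent X"
proof (rule V.independent_if_scalars_zero[OF assms(1)])
  fix f x assume s: "(\<Sum>x\<in>X. ncscale (f x) x) = 0" and x: "x \<in> X"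
  have "0 = (\<Sum>y\<in>X. ncscale (f y) y) (e x)" using s by simp
  also have "\<dots> = (\<Sum>y\<in>X. f y * y (e x))" by (simp add: ncscale_def sum_apply)
  also have "\<dots> = (\<Sum>y\<in>X. if y = x then f y else 0)"
    by (rule sum.cong) (use assms x in auto)
  also have "\<dots> = f x" using x assms(1) by simp
  finally show "f x = 0" by simp
qed

lemma indep_witness_img:
  assumes "finite S" "\<And>s. s \<in> S \<Longrightarrow> g s (e s) = 1"
    "\<And>s s'. s \<in> S \<Longrightarrow> s' \<in> S \<Longrightarrow> s' \<noteq> s \<Longrightarrow> g s' (e s) = (0::'k::field)"
  shows "V.independent (g ` S)" "inj_on g S"
proof -
  show inj: "inj_on g S"
  proof (rule inj_onI)
    fix s s' assume "s \<in> S" "s' \<in> S" "g s = g s'"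
    then show "s = s'" using assms(2)[of s] assms(3)[of s s'] by force
  qed
  show "V.independent (g ` S)"
  proof (rule indep_witness[where e = "\<lambda>x. e (inv_into S g x)"])
  qed (use assms inj in \<open>auto simp: inv_into_f_f, metis\<close>)
qed

definition Wn :: "nat \<Rightarrow> bool list set" where "Wn n = {w. length w = n}"
definition Norm :: "nat \<Rightarrow> bool list set" where "Norm n = {w. length w = n \<and> \<not> (\<exists>t. occ w t)}"
definition Redw :: "nat \<Rightarrow> bool list set" where "Redw n = {w. length w = n \<and> (\<exists>t. occ w t)}"

lemma card_Wn: "card (Wn n) = 2 ^ n"
  using card_lists_length_eq[of "UNIV :: bool set" n] by (simp add: Wn_def)

lemma finite_Wn: "finite (Wn n)" by (simp add: Wn_def finite_len)

lemma hom_expand: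
  assumes "f \<in> nc_hom n"
  shows "f = (\<Sum>w\<in>Wn n. ncscale (f w) (mon w :: bool list \<Rightarrow> 'k::field))"
proof (rule ext)
  fix v
  have "(\<Sum>w\<in>Wn n. ncscale (f w) (mon w :: bool list \<Rightarrow> 'k)) v = (\<Sum>w\<in>Wn n. if v = w then f w else 0)"
    by (simp add: sum_apply ncscale_def mon_def if_distrib cong: if_cong)
  also have "\<dots> = f v" using assms finite_Wn[of n] by (auto simp: Wn_def nc_hom_def)
  finally show "f v = (\<Sum>w\<in>Wn n. ncscale (f w) (mon w :: bool list \<Rightarrow> 'k)) v" by simp
qed

lemma dim_hom: "V.dim (nc_hom n :: (bool list \<Rightarrow> 'k::field) set) = 2 ^ n"
proof (rule V.dim_unique)
  show "(mon ` Wn n :: (bool list \<Rightarrow> 'k) set) \<subseteq> nc_hom n"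
    by (auto simp: nc_hom_def mon_def Wn_def)
  show "nc_hom n \<subseteq> V.span (mon ` Wn n :: (bool list \<Rightarrow> 'k) set)"
  proof
    fix f :: "bool list \<Rightarrow> 'k" assume f: "f \<in> nc_hom n"
    show "f \<in> V.span (mon ` Wn n)"
      by (subst hom_expand[OF f]) (intro V.span_sum V.span_scale V.span_base imageI)
  qed
  show "V.independent (mon ` Wn n :: (bool list \<Rightarrow> 'k) set)"
    by (rule indep_witness_img[where e = "\<lambda>w. w"]) (auto simp: finite_Wn mon_def)
  have "inj_on (mon :: bool list \<Rightarrow> bool list \<Rightarrow> 'k) (Wn n)"
    by (rule indep_witness_img[where e = "\<lambda>w. w"]) (auto simp: finite_Wn mon_def)
  then show "card (mon ` Wn n :: (bool list \<Rightarrow> 'k) set) = 2 ^ n"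
    by (simp add: card_image card_Wn)
qed



lemma NF_zero_red: "\<exists>t. occ v t \<Longrightarrow> NF p w v = 0"
  using NF_support by blast

lemma NF_zero_len: "length v \<noteq> length w \<Longrightarrow> NF p w v = 0"
  using NF_support by blast

lemma dim_ideal:
  assumes p: "p \<noteq> 0"
  shows "V.dim (nc_ideal {r3 p, r4 p} \<inter> nc_hom n) = card (Redw n)"
proof (rule V.dim_unique)
  let ?g = "\<lambda>w. mon w - (\<lambda>v. NF p w v)"
  show "?g ` Redw n \<subseteq> nc_ideal {r3 p, r4 p} \<inter> nc_hom n"
    using NF_in[OF p] by (auto simp: nc_hom_def Redw_def mon_def NF_zero_len)
  have fin: "finite (Redw n)" using finite_Wn[of n] by (rule finite_subset[rotated]) (auto simp: Wn_def Redw_def)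
  have ind1: "V.independent (?g ` Redw n)"
    by (rule indep_witness_img(1)[where e = "\<lambda>w. w", OF fin]) (auto simp: mon_def Redw_def NF_zero_red)
  have ind2: "inj_on ?g (Redw n)"
    by (rule indep_witness_img(2)[where e = "\<lambda>w. w", OF fin]) (auto simp: mon_def Redw_def NF_zero_red)
  note ind = ind1 ind2
  show "V.independent (?g ` Redw n)" by (rule ind)
  show "card (?g ` Redw n) = card (Redw n)" by (rule card_image[OF ind(2)])
  show "nc_ideal {r3 p, r4 p} \<inter> nc_hom n \<subseteq> V.span (?g ` Redw n)"
  proof
    fix f assume f: "f \<in> nc_ideal {r3 p, r4 p} \<inter> nc_hom n"
    have Phi0: "Phi p f = 0" using f Phi_ideal by blast
    have fe: "f = (\<Sum>w\<in>Wn n. ncscale (f w) (mon w))" using f hom_expand by blast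
    have "f = (\<Sum>w\<in>Wn n. ncscale (f w) (?g w))"
    proof (rule ext)
      fix v
      have "(\<Sum>w\<in>Wn n. ncscale (f w) (?g w)) v = (\<Sum>w\<in>Wn n. ncscale (f w) (mon w)) v - (\<Sum>w\<in>Wn n. f w * NF p w v)"
        by (simp add: sum_apply ncscale_def algebra_simps sum_subtractf)
      also have "(\<Sum>w\<in>Wn n. f w * NF p w v) = 0"
      proof (cases "length v = n")
        case True
        then show ?thesis using fun_cong[OF Phi0, of v] by (simp add: Phi_def Wn_def)
      next
        case False
        then show ?thesis by (intro sum.neutral) (auto simp: Wn_def NF_zero_len)
      qed
      finally show "f v = (\<Sum>w\<in>Wn n. ncscale (f w) (?g w)) v" using fe by (simp add: fun_diff_def)
    qed
    also have "\<dots> = (\<Sum>w\<in>Redw n. ncscale (f w) (?g w))"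
    proof (rule sum.mono_neutral_right[OF finite_Wn])
      show "Redw n \<subseteq> Wn n" by (auto simp: Wn_def Redw_def)
      show "\<forall>w\<in>Wn n - Redw n. ncscale (f w) (?g w) = 0"
        by (auto simp: Wn_def Redw_def fun_eq_iff ncscale_def NF_nocc mon_def)
    qed
    finally show "f \<in> V.span (?g ` Redw n)"
      by (metis (no_types, lifting) V.span_base V.span_scale V.span_sum imageI)
  qed
qed

lemma card_split: "card (Redw n) + card (Norm n) = 2 ^ n"
proof -
  have "Wn n = Redw n \<union> Norm n" "Redw n \<inter> Norm n = {}" by (auto simp: Wn_def Redw_def Norm_def)
  moreover have "finite (Redw n)" "finite (Norm n)"
    using finite_Wn[of n] by (auto intro: finite_subset[rotated] simp: Wn_def Redw_def Norm_def)
  ultimately show ?thesis using card_Wn[of n] by (metis card_Un_disjoint)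
qed

lemma quot_dim_eq:
  assumes "(p::'k::field) \<noteq> 0"
  shows "quot_dim (nc_ideal {r3 p, r4 p}) n = card (Norm n)"
  unfolding quot_dim_def using dim_hom[where 'k='k] dim_ideal[OF assms, of n] card_split[of n] by simp



definition cnt :: "('a \<Rightarrow> nat) \<Rightarrow> nat \<Rightarrow> nat" where
  "cnt f n = card {x. f x = n}"

lemma cnt_prod:
  assumes "\<And>k. finite {x. f x = k}" "\<And>k. finite {y. g y = k}"
  shows "cnt (\<lambda>(x, y). f x + g y) n = (\<Sum>k\<le>n. cnt f k * cnt g (n - k))"
proof -
  have "cnt (\<lambda>(x, y). f x + g y) n = card (SIGMA k:{..n}. {x. f x = k} \<times> {y. g y = n - k})"
    unfolding cnt_def
  proof (rule bij_betw_same_card[where f = "\<lambda>(x, y). (f x, (x, y))"])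
    show "bij_betw (\<lambda>(x, y). (f x, x, y)) {x. (case x of (x, y) \<Rightarrow> f x + g y) = n}
        (SIGMA k:{..n}. {x. f x = k} \<times> {y. g y = n - k})"
      by (rule bij_betw_byWitness[where f' = "\<lambda>(k, xy). xy"]) auto
  qed
  also have "\<dots> = (\<Sum>k\<le>n. cnt f k * cnt g (n - k))"
    using assms by (simp add: card_SigmaI card_cartesian_product cnt_def)
  finally show ?thesis .
qed

definition gf :: "('a \<Rightarrow> nat) \<Rightarrow> rat fps" where
  "gf f = Abs_fps (\<lambda>n. of_nat (cnt f n))"

lemma gf_prod:
  assumes "\<And>k. finite {x. f x = k}" "\<And>k. finite {y. g y = k}"
  shows "gf (\<lambda>(x, y). f x + g y) = gf f * gf g"
  by (simp add: fps_eq_iff gf_def fps_mult_nth cnt_prod[OF assms] atLeast0AtMost)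

lemma fin_mult: "d > 0 \<Longrightarrow> finite {m :: nat. d * m = k}"
  by (rule finite_subset[of _ "{..k}"]) auto

lemma cnt_mult: "d > 0 \<Longrightarrow> cnt (\<lambda>m::nat. d * m) n = (if d dvd n then 1 else 0)"
proof -
  assume d: "d > 0"
  show ?thesis
  proof (cases "d dvd n")
    case True
    then obtain q where "n = d * q" by blast
    then have "{m. d * m = n} = {q}" using d by auto
    then show ?thesis using True by (simp add: cnt_def)
  next
    case False
    then have "{m. d * m = n} = {}" by auto
    then show ?thesis using False by (simp add: cnt_def)
  qed
qed

lemma gf_mult_inv: "d > 0 \<Longrightarrow> gf (\<lambda>m::nat. d * m) * (1 - fps_X ^ d) = 1"
proof -
  assume d: "d > 0"
  show ?thesis
  proof (rule fps_ext)
    fix n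
    have "(gf (\<lambda>m::nat. d * m) * (1 - fps_X ^ d)) $ n = gf (\<lambda>m::nat. d * m) $ n - (gf (\<lambda>m::nat. d * m) * fps_X ^ d) $ n"
      by (simp add: algebra_simps)
    also have "\<dots> = (1::rat fps) $ n"
      using d by (auto simp: fps_X_power_mult_right_nth gf_def cnt_mult[OF d] dvd_diff_nat le_imp_diff_is_add)
         (metis dvd_add_right_iff dvd_refl le_add_diff_inverse2 nat_less_le not_less)
    finally show "(gf (\<lambda>m::nat. d * m) * (1 - fps_X ^ d)) $ n = (1::rat fps) $ n" .
  qed
qed



definition nrm :: "bool list \<Rightarrow> bool" where "nrm w \<longleftrightarrow> \<not> (\<exists>t. occ w t)"

lemma occ_Cons: "(\<exists>t. occ (b # w) t) \<longleftrightarrow> (\<exists>r C. b # w = lhs r @ C) \<or> (\<exists>t. occ w t)"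
proof
  assume "\<exists>t. occ (b # w) t"
  then obtain A r C where o: "b # w = A @ lhs r @ C" by (auto simp: occ_def)
  show "(\<exists>r C. b # w = lhs r @ C) \<or> (\<exists>t. occ w t)"
  proof (cases A)
    case Nil then show ?thesis using o by auto
  next
    case (Cons a A') then have "occ w (A', r, C)" using o by (simp add: occ_def)
    then show ?thesis by blast
  qed
next
  assume "(\<exists>r C. b # w = lhs r @ C) \<or> (\<exists>t. occ w t)"
  then show "\<exists>t. occ (b # w) t"
  proof
    assume "\<exists>r C. b # w = lhs r @ C"
    then obtain r C where "b # w = lhs r @ C" by blast
    then have "occ (b # w) ([], r, C)" by (simp add: occ_def)
    then show ?thesis by blast
  next
    assume "\<exists>t. occ w t"
    then obtain A r C where "w = A @ lhs r @ C" by (auto simp: occ_def)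
    then have "occ (b # w) (b # A, r, C)" by (simp add: occ_def)
    then show ?thesis by blast
  qed
qed

lemma nrm_Cons: "nrm (b # w) \<longleftrightarrow> \<not> (\<exists>r C. b # w = lhs r @ C) \<and> nrm w"
  unfolding nrm_def occ_Cons by blast

lemma nrm_Nil: "nrm []"
proof -
  have "\<not> occ [] t" for t by (cases t; rename_tac a b; case_tac b; rename_tac r C; case_tac r) (auto simp: occ_def)
  then show ?thesis by (auto simp: nrm_def)
qed

lemma hT: "\<not> (\<exists>r C. True # w = lhs r @ C)"
proof - have "True # w \<noteq> lhs r @ C" for r C by (cases r) auto then show ?thesis by blast qed

lemma hFT: "(\<exists>r C. False # True # w = lhs r @ C) \<longleftrightarrow> (\<exists>C. w = True # C)"
proof
  assume "\<exists>r C. False # True # w = lhs r @ C"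
  then obtain r C where "False # True # w = lhs r @ C" by blast
  then show "\<exists>C. w = True # C" by (cases r) auto
next
  assume "\<exists>C. w = True # C"
  then obtain C where "w = True # C" by blast
  then have "False # True # w = lhs R1 @ C" by simp
  then show "\<exists>r C. False # True # w = lhs r @ C" by blast
qed

lemma hFF: "(\<exists>r C. False # False # w = lhs r @ C) \<longleftrightarrow> (\<exists>C. w = False # True # C) \<or> (\<exists>C. w = True # False # True # C)"
proof
  assume "\<exists>r C. False # False # w = lhs r @ C"
  then obtain r C where "False # False # w = lhs r @ C" by blast
  then show "(\<exists>C. w = False # True # C) \<or> (\<exists>C. w = True # False # True # C)" by (cases r) auto
next
  assume "(\<exists>C. w = False # True # C) \<or> (\<exists>C. w = True # False # True # C)"
  then show "\<exists>r C. False # False # w = lhs r @ C"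
  proof
    assume "\<exists>C. w = False # True # C"
    then obtain C where "w = False # True # C" by blast
    then have "False # False # w = lhs R2 @ C" by simp
    then show ?thesis by blast
  next
    assume "\<exists>C. w = True # False # True # C"
    then obtain C where "w = True # False # True # C" by blast
    then have "False # False # w = lhs R3 @ C" by simp
    then show ?thesis by blast
  qed
qed

lemma hF1: "\<not> (\<exists>r C. [False] = lhs r @ C)"
proof - have "[False] \<noteq> lhs r @ C" for r C by (cases r) auto then show ?thesis by blast qed

lemma nrm_T: "nrm (True # w) \<longleftrightarrow> nrm w"
  using nrm_Cons hT by blast
lemma nrm_FT: "nrm (False # True # w) \<longleftrightarrow> nrm (True # w) \<and> \<not> (\<exists>C. w = True # C)"
  using nrm_Cons[of False "True # w"] hFT by blast
lemma nrm_FF: "nrm (False # False # w) \<longleftrightarrow> nrm (False # w) \<and> \<not> (\<exists>C. w = False # True # C) \<and> \<not> (\<exists>C. w = True # False # True # C)"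
  using nrm_Cons[of False "False # w"] hFF by blast
lemma nrm_F1: "nrm [False]"
  using nrm_Cons[of False "[]"] hF1 nrm_Nil by blast

definition P3 :: "nat \<Rightarrow> nat \<Rightarrow> bool list" where
  "P3 j c = concat (replicate j [False, False, True]) @ replicate c False"
definition P2 :: "nat \<Rightarrow> nat \<Rightarrow> nat \<Rightarrow> bool list" where
  "P2 i j c = concat (replicate i [False, True]) @ P3 j c"
definition nw :: "nat \<Rightarrow> nat \<Rightarrow> nat \<Rightarrow> nat \<Rightarrow> bool list" where
  "nw a i j c = replicate a True @ P2 i j c"

lemma P3_Suc: "P3 (Suc j) c = False # False # True # P3 j c" by (simp add: P3_def)
lemma P3_0: "P3 0 c = replicate c False" by (simp add: P3_def)
lemma P2_Suc: "P2 (Suc i) j c = False # True # P2 i j c" by (simp add: P2_def)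
lemma P2_0: "P2 0 j c = P3 j c" by (simp add: P2_def)
lemma nw_Suc: "nw (Suc a) i j c = True # nw a i j c" by (simp add: nw_def)
lemma nw_0: "nw 0 i j c = P2 i j c" by (simp add: nw_def)

lemma rep_FT: "replicate c False \<noteq> False # True # C"
  by (cases c; cases "c - 1") auto
lemma rep_T: "replicate c False \<noteq> True # C"
  by (cases c) auto
lemma P3_FT: "P3 j c \<noteq> False # True # C"
  by (cases j) (auto simp: P3_Suc P3_0 rep_FT)
lemma P3_T: "P3 j c \<noteq> True # C"
  by (cases j) (auto simp: P3_Suc P3_0 rep_T)
lemma P2_T: "P2 i j c \<noteq> True # C"
  by (cases i) (auto simp: P2_Suc P2_0 P3_T)

lemma nrm_rep: "nrm (replicate c False)"
proof (induction c)
  case 0 then show ?case by (simp add: nrm_Nil)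
next
  case (Suc c)
  show ?case
  proof (cases c)
    case 0 then show ?thesis by (simp add: nrm_F1)
  next
    case (Suc c')
    then show ?thesis using Suc.IH rep_FT[of c'] rep_T[of c'] by (simp add: nrm_FF)
  qed
qed

lemma nrm_P3: "nrm (P3 j c)"
proof (induction j)
  case 0 then show ?case by (simp add: P3_0 nrm_rep)
next
  case (Suc j)
  have "nrm (False # True # P3 j c)" using Suc P3_T[of j c] by (simp add: nrm_FT nrm_T)
  then show ?case using P3_FT[of j c] by (simp add: P3_Suc nrm_FF)
qed

lemma nrm_P2: "nrm (P2 i j c)"
proof (induction i)
  case 0 then show ?case by (simp add: P2_0 nrm_P3)
next
  case (Suc i)
  then show ?case using P2_T[of i j c] by (simp add: P2_Suc nrm_FT nrm_T)
qed

lemma nrm_nw: "nrm (nw a i j c)"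
  by (induction a) (simp_all add: nw_0 nw_Suc nrm_P2 nrm_T)

lemma nrm_tl: "nrm (b # w) \<Longrightarrow> nrm w"
  using nrm_Cons by blast

lemma nrm_is_nw: "nrm w \<Longrightarrow> \<exists>a i j c. w = nw a i j c"
proof (induction w)
  case Nil
  have "[] = nw 0 0 0 0" by (simp add: nw_def P2_def P3_def)
  then show ?case by blast
next
  case (Cons b w)
  then obtain a i j c where w: "w = nw a i j c" using nrm_tl by blast
  show ?case
  proof (cases b)
    case True
    then have "b # w = nw (Suc a) i j c" using w by (simp add: nw_Suc)
    then show ?thesis by blast
  next
    case False
    note b = False
    show ?thesis
    proof (cases a)
      case (Suc a')
      show ?thesis
      proof (cases a')
        case 0
        then have "b # w = nw 0 (Suc i) j c" using w b Suc by (simp add: nw_Suc nw_0 P2_Suc)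
        then show ?thesis by blast
      next
        case (Suc a'')
        then have "b # w = False # True # True # nw a'' i j c" using w b \<open>a = Suc a'\<close> by (simp add: nw_Suc)
        then show ?thesis using Cons.prems by (simp add: nrm_FT)
      qed
    next
      case 0
      then have w': "w = P2 i j c" using w by (simp add: nw_0)
      show ?thesis
      proof (cases i)
        case (Suc i')
        show ?thesis
        proof (cases i')
          case 0
          then have "b # w = nw 0 0 (Suc j) c" using w' b Suc by (simp add: nw_0 P2_Suc P2_0 P3_Suc)
          then show ?thesis by blast
        next
          case (Suc i'')
          then have "b # w = False # False # True # False # True # P2 i'' j c" using w' b \<open>i = Suc i'\<close> by (simp add: P2_Suc)
          then show ?thesis using Cons.prems by (simp add: nrm_FF)
        qed
      next
        case 0
        then have w'': "w = P3 j c" using w' by (simp add: P2_0)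
        show ?thesis
        proof (cases j)
          case 0
          then have "b # w = nw 0 0 0 (Suc c)" using w'' b by (simp add: nw_0 P2_0 P3_0)
          then show ?thesis by blast
        next
          case (Suc j')
          then have "b # w = False # False # False # True # P3 j' c" using w'' b by (simp add: P3_Suc)
          then show ?thesis using Cons.prems by (simp add: nrm_FF)
        qed
      qed
    qed
  qed
qed

fun decode :: "bool list \<Rightarrow> nat \<times> nat \<times> nat \<times> nat" where
  "decode [] = (0, 0, 0, 0)"
| "decode (True # w) = (case decode w of (a, i, j, c) \<Rightarrow> (Suc a, i, j, c))"
| "decode (False # True # w) = (case decode w of (a, i, j, c) \<Rightarrow> (0, Suc i, j, c))"
| "decode (False # False # True # w) = (case decode w of (a, i, j, c) \<Rightarrow> (0, 0, Suc j, c))"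
| "decode (False # w) = (case decode w of (a, i, j, c) \<Rightarrow> (0, 0, 0, Suc c))"

lemma decode_rep: "decode (replicate c False) = (0, 0, 0, c)"
proof (induction c)
  case (Suc c)
  then show ?case by (cases c; cases "c - 1") auto
qed simp

lemma decode_P3: "decode (P3 j c) = (0, 0, j, c)"
  by (induction j) (simp_all add: P3_0 P3_Suc decode_rep)

lemma decode_P2: "decode (P2 i j c) = (0, i, j, c)"
  by (induction i) (simp_all add: P2_0 P2_Suc decode_P3)

lemma decode_nw: "decode (nw a i j c) = (a, i, j, c)"
  by (induction a) (simp_all add: nw_0 nw_Suc decode_P2)

lemma length_nw: "length (nw a i j c) = a + 2 * i + 3 * j + c"
  by (simp add: nw_def P2_def P3_def length_concat sum_list_replicate)



definition W2 :: "nat \<times> nat \<Rightarrow> nat" where "W2 = (\<lambda>(x, y). 3 * x + 1 * y)"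
definition W3 :: "nat \<times> nat \<times> nat \<Rightarrow> nat" where "W3 = (\<lambda>(x, y). 2 * x + W2 y)"
definition W4 :: "nat \<times> nat \<times> nat \<times> nat \<Rightarrow> nat" where "W4 = (\<lambda>(x, y). 1 * x + W3 y)"

lemma fin_fib_prod:
  assumes "\<And>k. finite {x. f x = k}" "\<And>k. finite {y. g y = k}"
  shows "finite {xy. (\<lambda>(x, y). f x + (g y :: nat)) xy = k}"
proof (rule finite_subset)
  show "{xy. (\<lambda>(x, y). f x + g y) xy = k} \<subseteq> (\<Union>i\<le>k. {x. f x = i}) \<times> (\<Union>i\<le>k. {y. g y = i})"
    by auto
  show "finite ((\<Union>i\<le>k. {x. f x = i}) \<times> (\<Union>i\<le>k. {y. g y = i}))"
    using assms by auto
qed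

lemma fin_W2: "finite {x. W2 x = k}"
  unfolding W2_def by (rule fin_fib_prod) (auto intro: fin_mult)
lemma fin_W3: "finite {x. W3 x = k}"
  unfolding W3_def by (rule fin_fib_prod) (auto intro: fin_mult fin_W2)

lemma gf_W4: "gf W4 = gf (\<lambda>m::nat. 1 * m) * (gf (\<lambda>m::nat. 2 * m) * (gf (\<lambda>m::nat. 3 * m) * gf (\<lambda>m::nat. 1 * m)))"
proof -
  have "gf W2 = gf (\<lambda>m::nat. 3 * m) * gf (\<lambda>m::nat. 1 * m)"
    unfolding W2_def by (rule gf_prod) (auto intro: fin_mult)
  moreover have "gf W3 = gf (\<lambda>m::nat. 2 * m) * gf W2"
    unfolding W3_def by (rule gf_prod) (auto intro: fin_mult fin_W2)
  moreover have "gf W4 = gf (\<lambda>m::nat. 1 * m) * gf W3"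
    unfolding W4_def by (rule gf_prod) (auto intro: fin_mult fin_W3)
  ultimately show ?thesis by simp
qed

lemma Norm_eq: "Norm n = (\<lambda>(a, i, j, c). nw a i j c) ` {t. W4 t = n}"
proof
  show "Norm n \<subseteq> (\<lambda>(a, i, j, c). nw a i j c) ` {t. W4 t = n}"
  proof
    fix w assume "w \<in> Norm n"
    then have w: "length w = n" "nrm w" by (auto simp: Norm_def nrm_def)
    then obtain a i j c where "w = nw a i j c" using nrm_is_nw by blast
    then show "w \<in> (\<lambda>(a, i, j, c). nw a i j c) ` {t. W4 t = n}"
      using w by (auto simp: W4_def W3_def W2_def length_nw intro!: image_eqI[where x = "(a, i, j, c)"])
  qed
  show "(\<lambda>(a, i, j, c). nw a i j c) ` {t. W4 t = n} \<subseteq> Norm n"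
    using nrm_nw by (auto simp: Norm_def nrm_def W4_def W3_def W2_def length_nw)
qed

lemma card_Norm: "card (Norm n) = cnt W4 n"
proof -
  have "inj_on (\<lambda>(a, i, j, c). nw a i j c) {t. W4 t = n}"
  proof (rule inj_onI)
    fix s t :: "nat \<times> nat \<times> nat \<times> nat"
    assume "(\<lambda>(a, i, j, c). nw a i j c) s = (\<lambda>(a, i, j, c). nw a i j c) t"
    then have "decode ((\<lambda>(a, i, j, c). nw a i j c) s) = decode ((\<lambda>(a, i, j, c). nw a i j c) t)" by simp
    then show "s = t" by (cases s; cases t) (simp add: decode_nw)
  qed
  then show ?thesis unfolding Norm_eq cnt_def by (rule card_image)
qed

lemma ring_id: "(1 - X)^2 * (1 - X^2) * (1 - X^3) * (a * (b * (c * a))) =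
  (a * (1 - X)) * (a * (1 - X)) * (b * (1 - X^2)) * (c * (1 - X^3))" for X a b c :: "'a::comm_ring_1"
  by (simp only: power2_eq_square mult_ac)

theorem lemma7p4:
  fixes p :: "'k::alg_closed_field"
  assumes "p \<noteq> 0"
  shows "hilbert_series (nc_ideal {r3 p, r4 p}) =
         inverse ((1 - fps_X)^2 * (1 - fps_X^2) * (1 - fps_X^3) :: rat fps)"
proof -
  have "hilbert_series (nc_ideal {r3 p, r4 p}) = gf W4"
    unfolding hilbert_series_def gf_def using quot_dim_eq[OF assms] card_Norm by simp
  also have "\<dots> = inverse ((1 - fps_X)^2 * (1 - fps_X^2) * (1 - fps_X^3) :: rat fps)"
  proof (rule fps_inverse_unique[symmetric])
    have h1: "gf (\<lambda>m::nat. 1 * m) * (1 - fps_X) = 1" using gf_mult_inv[of 1] by simp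
    have h2: "gf (\<lambda>m::nat. 2 * m) * (1 - fps_X^2) = 1" using gf_mult_inv[of 2] by simp
    have h3: "gf (\<lambda>m::nat. 3 * m) * (1 - fps_X^3) = 1" using gf_mult_inv[of 3] by simp
    have "(1 - fps_X)^2 * (1 - fps_X^2) * (1 - fps_X^3) * gf W4 =
      (gf (\<lambda>m::nat. 1 * m) * (1 - fps_X)) * (gf (\<lambda>m::nat. 1 * m) * (1 - fps_X)) *
      (gf (\<lambda>m::nat. 2 * m) * (1 - fps_X^2)) * (gf (\<lambda>m::nat. 3 * m) * (1 - fps_X^3))"
      unfolding gf_W4 by (rule ring_id)
    then show "(1 - fps_X)^2 * (1 - fps_X^2) * (1 - fps_X^3) * gf W4 = 1"
      using h1 h2 h3 by simp
  qed
  finally show ?thesis .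
qed


end
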